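(* Let $X,Y$ be Banach spaces, let $F:X\rightrightarrows Y$ be a closed convex set-valued mapping, let $A\subset X$ be a closed convex set, let $\bar y\in Y$, put $S:=F^{-1}(\bar y)\cap A$, and let $\bar x\in S$. Suppose that the set $DF^{-1}(\bar y,\bar x)(B_Y)\cap(T(A,\bar x)+B_X)\cap B_X$ is relatively compact in $X$. Then ${\rm ssubreg}_AF(\bar x,\bar y)<+\infty$ if and only if $$DF^{-1}(\bar y,\bar x)(0)\cap T(A,\bar x)=\{0\}.$$
   Context: $B_X,B_Y$ are the closed unit balls; $B(x,\delta)$ is the open ball. $F$ closed convex means ${\rm gph}(F)=\{(x,y):y\in F(x)\}$ is closed and convex in $X\times Y$. For a closed convex set $C$ and $a\in C$, the contingent cone $T(C,a)$ is the set of $v$ for which there exist $v_n\to v$, $t_n\to0^+$ with $a+t_nv_n\in C$ for all $n$. For $(x,y)\in{\rm gph}(F)$, $DF^{-1}(y,x)(v):=\{u\in X:(u,v)\in T({\rm gph}(F),(x,y))\}$ and $DF^{-1}(y,x)(W)=\bigcup_{v\in W}DF^{-1}(y,x)(v)$ for $W\subset Y$. ${\rm ssubreg}_AF(\bar x,\bar y):=\inf\{\tau>0:\exists\delta>0$ such that $\|x-\bar x\|\le\tau(d(\bar y,F(x))+d(x,A))$ for all $x\in B(\bar x,\delta)\}$, with $\inf\emptyset=+\infty$. *)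

theory Defs
  imports "HOL-Analysis.Analysis"
begin

definition gph :: "('a \<Rightarrow> 'b set) \<Rightarrow> ('a \<times> 'b) set" where
  "gph F = {(x, y). y \<in> F x}"

definition contingent_cone :: "'a::real_normed_vector set \<Rightarrow> 'a \<Rightarrow> 'a set" where
  "contingent_cone C a = {v. \<exists>vs ts. vs \<longlonglongrightarrow> v \<and> ts \<longlonglongrightarrow> 0 \<and> (\<forall>n. ts n > 0)
       \<and> (\<forall>n. a + ts n *\<^sub>R vs n \<in> C)}"

definition DFinv :: "('a::real_normed_vector \<Rightarrow> 'b::real_normed_vector set) \<Rightarrow> 'b \<Rightarrow> 'a \<Rightarrow> 'b \<Rightarrow> 'a set" where
  "DFinv F y x v = {u. (u, v) \<in> contingent_cone (gph F) (x, y)}"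

definition DFinv_set :: "('a::real_normed_vector \<Rightarrow> 'b::real_normed_vector set) \<Rightarrow> 'b \<Rightarrow> 'a \<Rightarrow> 'b set \<Rightarrow> 'a set" where
  "DFinv_set F y x W = (\<Union>v\<in>W. DFinv F y x v)"

definition edist :: "'a::metric_space \<Rightarrow> 'a set \<Rightarrow> ereal" where
  "edist y S = (if S = {} then \<infinity> else ereal (infdist y S))"

text \<open>Strong subregularity modulus relative to A (inf of the empty set is +\<infinity>).\<close>
definition ssubreg :: "'a::real_normed_vector set \<Rightarrow> ('a \<Rightarrow> 'b::real_normed_vector set) \<Rightarrow> 'a \<Rightarrow> 'b \<Rightarrow> ereal" where
  "ssubreg A F xb yb = Inf (ereal ` {\<tau>. \<tau> > 0 \<and> (\<exists>\<delta>>0. \<forall>x\<in>ball xb \<delta>.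
       ereal (norm (x - xb)) \<le> ereal \<tau> * (edist yb (F x) + edist x A))})"

end

theory Submission
  imports Defs
begin

lemma convex_seg:
  fixes C :: "'a::real_normed_vector set"
  assumes "convex C" "a \<in> C" "a + s *\<^sub>R w \<in> C" "0 < t" "t \<le> s"
  shows "a + t *\<^sub>R w \<in> C"
proof -
  have "(1 - t/s) *\<^sub>R a + (t/s) *\<^sub>R (a + s *\<^sub>R w) \<in> C"
    using assms by (intro convexD) auto
  moreover have "(1 - t/s) *\<^sub>R a + (t/s) *\<^sub>R (a + s *\<^sub>R w) = a + t *\<^sub>R w"
    using assms by (simp add: algebra_simps)
  ultimately show ?thesis by simp
qed

lemma cone_mem:
  fixes C :: "'a::real_normed_vector set"
  assumes "convex C" "a \<in> C" "a + t *\<^sub>R w \<in> C" "0 < t"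
  shows "w \<in> contingent_cone C a"
  unfolding contingent_cone_def
proof (intro CollectI exI conjI allI)
  show "(\<lambda>n. w) \<longlonglongrightarrow> w" by simp
  have "(\<lambda>n. t * inverse (real (Suc n))) \<longlonglongrightarrow> t * 0"
    by (intro tendsto_mult tendsto_const LIMSEQ_inverse_real_of_nat)
  then show "(\<lambda>n. t * inverse (real (Suc n))) \<longlonglongrightarrow> 0" by simp
  fix n
  show "0 < t * inverse (real (Suc n))" using assms by simp
  have "t * inverse (real (Suc n)) \<le> t" using assms
    by (simp add: mult_le_cancel_left1 field_simps)
  then show "a + (t * inverse (real (Suc n))) *\<^sub>R w \<in> C"
    using convex_seg[OF assms(1,2,3)] assms(4) by simp
qed

lemma null_seq:
  fixes f :: "nat \<Rightarrow> 'a::real_normed_vector"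
  assumes "\<And>n. norm (f n) < inverse (real (Suc n))"
  shows "f \<longlonglongrightarrow> 0"
  by (rule Lim_null_comparison[OF _ LIMSEQ_inverse_real_of_nat])
     (use assms in \<open>auto intro: always_eventually less_imp_le\<close>)

lemma ssubreg_fin:
  "ssubreg A F xb yb < \<infinity> \<longleftrightarrow> {\<tau>. \<tau> > 0 \<and> (\<exists>\<delta>>0. \<forall>x\<in>ball xb \<delta>.
       ereal (norm (x - xb)) \<le> ereal \<tau> * (edist yb (F x) + edist x A))} \<noteq> {}"
  (is "_ \<longleftrightarrow> ?S \<noteq> {}")
proof
  assume "ssubreg A F xb yb < \<infinity>"
  then show "?S \<noteq> {}" unfolding ssubreg_def by (metis Inf_empty image_empty infinity_ereal_def less_irrefl top_ereal_def)
next
  assume "?S \<noteq> {}"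
  then obtain \<tau> where "\<tau> \<in> ?S" by blast
  then have "ssubreg A F xb yb \<le> ereal \<tau>" unfolding ssubreg_def by (intro Inf_lower) auto
  then show "ssubreg A F xb yb < \<infinity>" by (metis ereal_infty_less_eq(1) ereal_less_PInfty less_ereal.simps(4) linorder_not_le)
qed

lemma forward:
  fixes F :: "'a::banach \<Rightarrow> 'b::banach set"
  assumes cA: "convex A" and xbA: "xb \<in> A"
    and tau: "\<tau> > 0" "\<delta> > 0"
    and H: "\<forall>x\<in>ball xb \<delta>. ereal (norm (x - xb)) \<le> ereal \<tau> * (edist yb (F x) + edist x A)"
    and uD: "u \<in> DFinv F yb xb 0" and uT: "u \<in> contingent_cone A xb"
  shows "u = 0"
proof -
  obtain vs ts where vs: "vs \<longlonglongrightarrow> (u, 0)" and ts: "ts \<longlonglongrightarrow> 0" "\<forall>n. ts n > 0"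
    and G: "\<forall>n. (xb, yb) + ts n *\<^sub>R vs n \<in> gph F"
    using uD unfolding DFinv_def contingent_cone_def by auto
  obtain ws ss where ws: "ws \<longlonglongrightarrow> u" and ss: "ss \<longlonglongrightarrow> 0" "\<forall>n. ss n > 0"
    and SA: "\<forall>n. xb + ss n *\<^sub>R ws n \<in> A"
    using uT unfolding contingent_cone_def by auto
  have f1: "(\<lambda>n. fst (vs n)) \<longlonglongrightarrow> u" using tendsto_fst[OF vs] by simp
  have f2: "(\<lambda>n. snd (vs n)) \<longlonglongrightarrow> 0" using tendsto_snd[OF vs] by simp
  have f3: "(\<lambda>n. ts n *\<^sub>R fst (vs n)) \<longlonglongrightarrow> 0"
    using tendsto_scaleR[OF ts(1) f1] by simp
  have bound: "norm u \<le> (1 + 3 * \<tau>) * e" if e: "e > 0" for e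
  proof -
    obtain k where k: "dist (ws k) u < e"
      using tendstoD[OF ws e] eventually_sequentially by auto
    have "\<forall>\<^sub>F n in sequentially. dist (fst (vs n)) u < e \<and> dist (snd (vs n)) 0 < e
        \<and> dist (ts n) 0 < ss k \<and> dist (ts n *\<^sub>R fst (vs n)) 0 < \<delta>"
      using tendstoD[OF f1 e] tendstoD[OF f2 e] tendstoD[OF ts(1) ss(2)[rule_format, of k]]
        tendstoD[OF f3 tau(2)] by (intro eventually_conj) auto
    then obtain n where n: "dist (fst (vs n)) u < e" "dist (snd (vs n)) 0 < e"
        "dist (ts n) 0 < ss k" "dist (ts n *\<^sub>R fst (vs n)) 0 < \<delta>"
      using eventually_sequentially by auto
    define t where "t = ts n"
    have t0: "t > 0" using ts t_def by auto
    define x where "x = xb + t *\<^sub>R fst (vs n)"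
    have xball: "x \<in> ball xb \<delta>" using n(4) by (simp add: x_def t_def dist_norm)
    have yF: "yb + t *\<^sub>R snd (vs n) \<in> F x"
      using G[rule_format, of n] by (cases "vs n") (simp add: gph_def x_def t_def)
    have aA: "xb + t *\<^sub>R ws k \<in> A"
      using convex_seg[OF cA xbA SA[rule_format, of k] t0] n(3) t0 by (simp add: t_def)
    have i1: "infdist yb (F x) \<le> t * e"
    proof -
      have "infdist yb (F x) \<le> dist yb (yb + t *\<^sub>R snd (vs n))" by (rule infdist_le[OF yF])
      also have "\<dots> = t * norm (snd (vs n))" using t0 by (simp add: dist_norm)
      also have "\<dots> \<le> t * e" using n(2) t0 by simp
      finally show ?thesis .
    qed
    have i2: "infdist x A \<le> t * (2 * e)"
    proof -
      have "infdist x A \<le> dist x (xb + t *\<^sub>R ws k)" by (rule infdist_le[OF aA])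
      also have "\<dots> = t * norm (fst (vs n) - ws k)" using t0
        by (simp add: dist_norm x_def flip: scaleR_diff_right)
      also have "norm (fst (vs n) - ws k) \<le> dist (fst (vs n)) u + dist (ws k) u"
        by (simp add: dist_norm) (metis dist_norm dist_triangle2)
      then have "t * norm (fst (vs n) - ws k) \<le> t * (2 * e)"
        using n(1) k t0 by (intro mult_left_mono) auto
      finally show ?thesis .
    qed
    have FxA: "F x \<noteq> {}" "A \<noteq> {}" using yF xbA by auto
    have "ereal (norm (x - xb)) \<le> ereal \<tau> * (edist yb (F x) + edist x A)"
      using H xball by blast
    then have "norm (x - xb) \<le> \<tau> * (infdist yb (F x) + infdist x A)"
      using FxA by (simp add: edist_def)
    also have "\<dots> \<le> \<tau> * (t * e + t * (2 * e))"
      using i1 i2 tau by (intro mult_left_mono) (linarith, simp)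
    finally have "t * norm (fst (vs n)) \<le> t * (3 * \<tau> * e)" using t0
      by (simp add: x_def algebra_simps)
    then have "norm (fst (vs n)) \<le> 3 * \<tau> * e" using t0 by simp
    moreover have "norm u \<le> norm (fst (vs n)) + dist (fst (vs n)) u"
      by (metis dist_0_norm dist_commute dist_triangle)
    ultimately show ?thesis using n(1) by (simp add: algebra_simps)
  qed
  show "u = 0"
  proof (rule ccontr)
    assume "u \<noteq> 0"
    then have p: "norm u > 0" by simp
    have "norm u \<le> (1 + 3 * \<tau>) * (norm u / (2 * (1 + 3 * \<tau>)))"
      using bound[of "norm u / (2 * (1 + 3 * \<tau>))"] p tau by simp
    also have "\<dots> = norm u / 2" using tau by (simp add: field_simps)
    finally show False using p by simp
  qed
qed

theorem proposition3p2:
  fixes F :: "'a::banach \<Rightarrow> 'b::banach set"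
    and A :: "'a set" and xb :: 'a and yb :: 'b
  assumes "closed (gph F)" and "convex (gph F)"
    and "closed A" and "convex A"
    and "xb \<in> {x. yb \<in> F x} \<inter> A"
    and "compact (closure (DFinv_set F yb xb (cball 0 1)
           \<inter> {t + b | t b. t \<in> contingent_cone A xb \<and> b \<in> cball 0 1} \<inter> cball 0 1))"
  shows "ssubreg A F xb yb < \<infinity> \<longleftrightarrow> DFinv F yb xb 0 \<inter> contingent_cone A xb = {0}"
proof
  have xbA: "xb \<in> A" and gxb: "(xb, yb) \<in> gph F" using assms(5) by (auto simp: gph_def)
  have zero: "0 \<in> DFinv F yb xb 0 \<inter> contingent_cone A xb"
    using cone_mem[OF assms(2) gxb, of 1 0] cone_mem[OF assms(4) xbA, of 1 0] gxb xbA
    by (simp add: DFinv_def zero_prod_def)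
  {
    assume "ssubreg A F xb yb < \<infinity>"
    then obtain \<tau> \<delta> where tau: "\<tau> > 0" "\<delta> > 0" and
      H: "\<forall>x\<in>ball xb \<delta>. ereal (norm (x - xb)) \<le> ereal \<tau> * (edist yb (F x) + edist x A)"
      unfolding ssubreg_fin by blast
    show "DFinv F yb xb 0 \<inter> contingent_cone A xb = {0}"
      using forward[OF assms(4) xbA tau H] zero by blast
  }
  {
    assume eq: "DFinv F yb xb 0 \<inter> contingent_cone A xb = {0}"
    show "ssubreg A F xb yb < \<infinity>"
      unfolding ssubreg_fin
    proof
      assume S: "{\<tau>. \<tau> > 0 \<and> (\<exists>\<delta>>0. \<forall>x\<in>ball xb \<delta>.
          ereal (norm (x - xb)) \<le> ereal \<tau> * (edist yb (F x) + edist x A))} = {}"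
      have "\<exists>x y a. dist xb x < inverse (real (Suc n)) \<and> y \<in> F x \<and> a \<in> A \<and>
          dist yb y < norm (x - xb) * inverse (real (Suc n)) \<and>
          dist x a < norm (x - xb) * inverse (real (Suc n)) \<and> norm (x - xb) > 0" for n
      proof -
        let ?N = "real (Suc n)"
        have "\<not> (\<forall>x\<in>ball xb (inverse ?N). ereal (norm (x - xb)) \<le> ereal ?N * (edist yb (F x) + edist x A))"
          using S by auto
        then obtain x where xb: "dist xb x < inverse ?N"
          and nl: "\<not> ereal (norm (x - xb)) \<le> ereal ?N * (edist yb (F x) + edist x A)"
          by auto
        have Fx: "F x \<noteq> {}"
        proof
          assume "F x = {}"
          moreover have "edist x A \<noteq> -\<infinity>" by (simp add: edist_def)
          ultimately have "edist yb (F x) + edist x A = \<infinity>"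
            by (simp add: edist_def)
          then have e: "ereal ?N * (edist yb (F x) + edist x A) = \<infinity>" by simp
          show False using nl unfolding e by simp
        qed
        have An: "A \<noteq> {}" using xbA by auto
        have lt: "?N * (infdist yb (F x) + infdist x A) < norm (x - xb)"
          using nl Fx An by (simp add: edist_def not_le)
        define t where "t = norm (x - xb)"
        have q1: "0 \<le> ?N * infdist x A" "0 \<le> ?N * infdist yb (F x)" by (simp_all add: infdist_nonneg)
        have p1: "?N * infdist yb (F x) < t" and p2: "?N * infdist x A < t"
          using lt q1 unfolding distrib_left t_def by linarith+
        have i1: "infdist yb (F x) < t * inverse ?N"
          using p1 by (simp add: field_simps)
        have i2: "infdist x A < t * inverse ?N"
          using p2 by (simp add: field_simps)
        have tp: "t > 0" using p1 q1 by linarith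
        obtain y where y: "y \<in> F x" "dist yb y < t * inverse ?N"
          using cInf_lessD[of "(\<lambda>a. dist yb a) ` F x"] i1 Fx by (auto simp: infdist_notempty)
        obtain a where a: "a \<in> A" "dist x a < t * inverse ?N"
          using cInf_lessD[of "(\<lambda>a. dist x a) ` A"] i2 An by (auto simp: infdist_notempty)
        show ?thesis using xb y a tp unfolding t_def by blast
      qed
      then obtain X Y Z where XYZ: "\<And>n. dist xb (X n) < inverse (real (Suc n)) \<and> Y n \<in> F (X n) \<and> Z n \<in> A \<and>
          dist yb (Y n) < norm (X n - xb) * inverse (real (Suc n)) \<and>
          dist (X n) (Z n) < norm (X n - xb) * inverse (real (Suc n)) \<and> norm (X n - xb) > 0"
        by metis
      define t where "t n = norm (X n - xb)" for n
      define u where "u n = inverse (t n) *\<^sub>R (X n - xb)" for n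
      define v where "v n = inverse (t n) *\<^sub>R (Y n - yb)" for n
      define w where "w n = inverse (t n) *\<^sub>R (Z n - xb)" for n
      have tp: "t n > 0" for n using XYZ[of n] t_def by auto
      have tsm: "t n < inverse (real (Suc n))" for n using XYZ[of n] by (simp add: t_def dist_norm norm_minus_commute)
      have nu: "norm (u n) = 1" for n using tp[of n] by (simp add: u_def t_def)
      have nv: "norm (v n) < inverse (real (Suc n))" for n
      proof -
        have "norm (v n) = dist yb (Y n) / t n" using tp[of n]
          by (simp add: v_def dist_norm norm_minus_commute divide_inverse_commute)
        also have "\<dots> < inverse (real (Suc n))" using XYZ[of n] tp[of n]
          by (simp add: t_def divide_less_eq mult.commute)
        finally show ?thesis .
      qed
      have nuw: "norm (u n - w n) < inverse (real (Suc n))" for n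
      proof -
        have "u n - w n = inverse (t n) *\<^sub>R (X n - Z n)"
          by (simp add: u_def w_def algebra_simps)
        then have "norm (u n - w n) = dist (X n) (Z n) / t n" using tp[of n]
          by (simp add: dist_norm divide_inverse_commute)
        also have "\<dots> < inverse (real (Suc n))" using XYZ[of n] tp[of n]
          by (simp add: t_def divide_less_eq mult.commute)
        finally show ?thesis .
      qed
      have gx: "(xb, yb) + t n *\<^sub>R (u n, v n) \<in> gph F" for n
        using XYZ[of n] tp[of n] by (simp add: u_def v_def gph_def)
      have ax: "xb + t n *\<^sub>R w n \<in> A" for n
        using XYZ[of n] tp[of n] by (simp add: w_def)
      let ?K = "DFinv_set F yb xb (cball 0 1)
           \<inter> {t + b | t b. t \<in> contingent_cone A xb \<and> b \<in> cball 0 1} \<inter> cball 0 1"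
      have inv1: "inverse (real (Suc k)) \<le> 1" for k by (simp add: field_simps)
      have uK: "u n \<in> closure ?K" for n
      proof -
        have "(u n, v n) \<in> contingent_cone (gph F) (xb, yb)"
          by (rule cone_mem[OF assms(2) gxb gx tp])
        moreover have "norm (v n) \<le> 1"
          using nv[of n] by (smt (verit) inv1)
        ultimately have uD: "u n \<in> DFinv_set F yb xb (cball 0 1)"
          by (auto simp: DFinv_set_def DFinv_def)
        have wT: "w n \<in> contingent_cone A xb" by (rule cone_mem[OF assms(4) xbA ax tp])
        have nb: "norm (u n - w n) \<le> 1"
          using nuw[of n] by (smt (verit) inv1)
        have nb': "norm (w n - u n) \<le> 1" using nb by (simp only: norm_minus_commute)
        have mem: "u n \<in> {t + b |t b. t \<in> contingent_cone A xb \<and> b \<in> cball 0 1}"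
          unfolding mem_Collect_eq
          by (rule exI[of _ "w n"], rule exI[of _ "u n - w n"]) (use wT nb' in \<open>simp add: dist_norm\<close>)
        from uD mem have "u n \<in> ?K" using nu[of n] by auto
        then show ?thesis by (rule closure_subset[THEN subsetD])
      qed
      obtain l r where l: "strict_mono r" "(u \<circ> r) \<longlonglongrightarrow> l"
        by (rule seq_compactE[OF compact_imp_seq_compact[OF assms(6)], of u]) (use uK in auto)
      have "(\<lambda>k. norm ((u \<circ> r) k)) \<longlonglongrightarrow> norm l" by (rule tendsto_norm[OF l(2)])
      moreover have "(\<lambda>k. norm ((u \<circ> r) k)) = (\<lambda>k. 1)" using nu by (simp add: o_def)
      ultimately have "(\<lambda>k. 1::real) \<longlonglongrightarrow> norm l" by simp
      then have nl: "norm l = 1" using LIMSEQ_unique[OF _ tendsto_const] by metis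
      have t0: "t \<longlonglongrightarrow> 0" by (rule null_seq) (use tsm tp in \<open>simp add: less_imp_le\<close>)
      have v0: "v \<longlonglongrightarrow> 0" by (rule null_seq) (rule nv)
      have uw0: "(\<lambda>n. u n - w n) \<longlonglongrightarrow> 0" by (rule null_seq) (rule nuw)
      have lD: "l \<in> DFinv F yb xb 0"
        unfolding DFinv_def contingent_cone_def
      proof (intro CollectI exI conjI allI)
        show "(\<lambda>k. (u (r k), v (r k))) \<longlonglongrightarrow> (l, 0)"
          using tendsto_Pair[OF l(2) LIMSEQ_subseq_LIMSEQ[OF v0 l(1)]] by (simp add: o_def)
        show "(t \<circ> r) \<longlonglongrightarrow> 0" using LIMSEQ_subseq_LIMSEQ[OF t0 l(1)] .
        fix k show "0 < (t \<circ> r) k" using tp by simp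
        show "(xb, yb) + (t \<circ> r) k *\<^sub>R (u (r k), v (r k)) \<in> gph F" using gx by simp
      qed
      have lT: "l \<in> contingent_cone A xb"
        unfolding contingent_cone_def
      proof (intro CollectI exI conjI allI)
        have "(\<lambda>k. u (r k) - (u (r k) - w (r k))) \<longlonglongrightarrow> l - 0"
          using tendsto_diff[OF l(2) LIMSEQ_subseq_LIMSEQ[OF uw0 l(1)]] by (simp add: o_def)
        then show "(w \<circ> r) \<longlonglongrightarrow> l" by (simp add: o_def)
        show "(t \<circ> r) \<longlonglongrightarrow> 0" using LIMSEQ_subseq_LIMSEQ[OF t0 l(1)] .
        fix k show "0 < (t \<circ> r) k" using tp by simp
        show "xb + (t \<circ> r) k *\<^sub>R (w \<circ> r) k \<in> A" using ax by simp
      qed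
      have "l \<in> {0}" using lD lT eq by blast
      then show False using nl by simp
    qed
  }
qed

end
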